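(* Let $S_X,S_Y$ be finite nonempty action sets, $\varphi:S_X\times S_Y\to\mathbb{R}$, and $\lambda\in[0,1)$. There exists a $(\varphi,\lambda)$-autocratic behavioral strategy for $X$ if and only if $\Phi_X^+\neq\emptyset$, $\Phi_X^-\neq\emptyset$, and either (i) $\Phi_X^+\cap\Phi_X^-\neq\emptyset$, or (ii) $\Phi_X^+\cap\Phi_X^-=\emptyset$ and $\lambda\ge\lambda_{\min}$, where $$\lambda_{\min}=1-\sup_{(\tau_X^+,\tau_X^-)\in\Phi_X^+\times\Phi_X^-}\frac{\min_{s_Y}\varphi(\tau_X^+,s_Y)-\max_{s_Y}\varphi(\tau_X^-,s_Y)}{\max\{\max_{s_Y}\varphi(\tau_X^+,s_Y)-\max_{s_Y}\varphi(\tau_X^-,s_Y),\ \min_{s_Y}\varphi(\tau_X^+,s_Y)-\min_{s_Y}\varphi(\tau_X^-,s_Y)\}},$$ all maxima and minima over $s_Y$ being taken over $S_Y$.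
   Context: Two players $X,Y$ play a repeated game with finite action sets $S_X,S_Y$; $\Delta(S)$ denotes the probability distributions on $S$. $\varphi$ is extended to mixed actions in its first argument by $\varphi(\tau_X,s_Y)=\mathbb{E}_{s_X\sim\tau_X}[\varphi(s_X,s_Y)]$. Histories: $\mathcal{H}=\bigcup_{T\ge0}(S_X\times S_Y)^T$. A behavioral strategy for $X$ is a map $\sigma_X:\mathcal{H}\to\Delta(S_X)$, similarly for $Y$; in each round $t$ players independently draw actions from their strategies evaluated at the history of realized action pairs of rounds $0,\dots,t-1$, and $\mathbb{E}_{\sigma_X,\sigma_Y}$ is the expectation over the resulting play. For $\lambda\in[0,1)$, $\sigma_X$ is $(\varphi,\lambda)$-autocratic if for every behavioral strategy $\sigma_Y$ of $Y$, $\mathbb{E}_{\sigma_X,\sigma_Y}\big[(1-\lambda)\sum_{t\ge0}\lambda^t\varphi(s_X^t,s_Y^t)\big]=0$. Define $\Phi_X^+=\{\tau_X\in\Delta(S_X):\min_{s_Y\in S_Y}\varphi(\tau_X,s_Y)\ge0\}$ and $\Phi_X^-=\{\tau_X\in\Delta(S_X):\max_{s_Y\in S_Y}\varphi(\tau_X,s_Y)\le0\}$. *)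

theory Defs
  imports "HOL-Probability.Probability"
begin

text \<open>Action sets are finite (nonempty) types 'a (for X) and 'b (for Y). Histories are lists of realized action pairs in
  chronological order (round 0 first).\<close>

type_synonym ('a, 'b) hist = "('a \<times> 'b) list"

definition phi_mix :: "('a \<Rightarrow> 'b \<Rightarrow> real) \<Rightarrow> 'a pmf \<Rightarrow> 'b \<Rightarrow> real" where
  "phi_mix phi \<tau> b = measure_pmf.expectation \<tau> (\<lambda>a. phi a b)"

text \<open>The auxiliary function takes the history in reversed order (most recent
  round first); strategies are always applied to the chronological history.\<close>

fun hist_prob_rev :: "(('a, 'b) hist \<Rightarrow> 'a pmf) \<Rightarrow> (('a, 'b) hist \<Rightarrow> 'b pmf)
    \<Rightarrow> ('a \<times> 'b) list \<Rightarrow> real" where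
  "hist_prob_rev \<sigma>X \<sigma>Y [] = 1"
| "hist_prob_rev \<sigma>X \<sigma>Y ((a, b) # h) =
     hist_prob_rev \<sigma>X \<sigma>Y h * pmf (\<sigma>X (rev h)) a * pmf (\<sigma>Y (rev h)) b"

definition hist_prob :: "(('a, 'b) hist \<Rightarrow> 'a pmf) \<Rightarrow> (('a, 'b) hist \<Rightarrow> 'b pmf)
    \<Rightarrow> ('a, 'b) hist \<Rightarrow> real" where
  "hist_prob \<sigma>X \<sigma>Y h = hist_prob_rev \<sigma>X \<sigma>Y (rev h)"

definition stage_payoff :: "('a::finite \<Rightarrow> 'b::finite \<Rightarrow> real)
    \<Rightarrow> (('a, 'b) hist \<Rightarrow> 'a pmf) \<Rightarrow> (('a, 'b) hist \<Rightarrow> 'b pmf) \<Rightarrow> nat \<Rightarrow> real" where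
  "stage_payoff phi \<sigma>X \<sigma>Y t =
     (\<Sum>h\<in>{h :: ('a, 'b) hist. length h = t}.
        hist_prob \<sigma>X \<sigma>Y h *
        (\<Sum>a\<in>UNIV. \<Sum>b\<in>UNIV. pmf (\<sigma>X h) a * pmf (\<sigma>Y h) b * phi a b))"

text \<open>Expected normalized discounted payoff
  E[(1-\<lambda>) \<Sum>t \<lambda>^t phi(s_X^t, s_Y^t)] (interchange of expectation and sum
  is justified since phi is bounded and \<lambda> < 1).\<close>

definition disc_payoff :: "('a::finite \<Rightarrow> 'b::finite \<Rightarrow> real) \<Rightarrow> real
    \<Rightarrow> (('a, 'b) hist \<Rightarrow> 'a pmf) \<Rightarrow> (('a, 'b) hist \<Rightarrow> 'b pmf) \<Rightarrow> real" where
  "disc_payoff phi lam \<sigma>X \<sigma>Y = (1 - lam) * (\<Sum>t. lam ^ t * stage_payoff phi \<sigma>X \<sigma>Y t)"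

definition autocratic :: "('a::finite \<Rightarrow> 'b::finite \<Rightarrow> real) \<Rightarrow> real
    \<Rightarrow> (('a, 'b) hist \<Rightarrow> 'a pmf) \<Rightarrow> bool" where
  "autocratic phi lam \<sigma>X \<longleftrightarrow> (\<forall>\<sigma>Y :: ('a, 'b) hist \<Rightarrow> 'b pmf. disc_payoff phi lam \<sigma>X \<sigma>Y = 0)"

definition minY :: "('a \<Rightarrow> 'b::finite \<Rightarrow> real) \<Rightarrow> 'a pmf \<Rightarrow> real" where
  "minY phi \<tau> = Min (range (phi_mix phi \<tau>))"

definition maxY :: "('a \<Rightarrow> 'b::finite \<Rightarrow> real) \<Rightarrow> 'a pmf \<Rightarrow> real" where
  "maxY phi \<tau> = Max (range (phi_mix phi \<tau>))"

definition PhiPlus :: "('a \<Rightarrow> 'b::finite \<Rightarrow> real) \<Rightarrow> 'a pmf set" where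
  "PhiPlus phi = {\<tau>. minY phi \<tau> \<ge> 0}"

definition PhiMinus :: "('a \<Rightarrow> 'b::finite \<Rightarrow> real) \<Rightarrow> 'a pmf set" where
  "PhiMinus phi = {\<tau>. maxY phi \<tau> \<le> 0}"

definition lambda_min :: "('a \<Rightarrow> 'b::finite \<Rightarrow> real) \<Rightarrow> real" where
  "lambda_min phi = 1 - Sup ((\<lambda>(tp, tm).
      (minY phi tp - maxY phi tm) /
      max (maxY phi tp - maxY phi tm) (minY phi tp - minY phi tm))
      ` (PhiPlus phi \<times> PhiMinus phi))"

end

theory Submission
  imports Defs
begin


lemma pmf_seq_compact:
  fixes \<tau> :: "nat \<Rightarrow> 'a::finite pmf"
  shows "\<exists>r \<tau>0. strict_mono r \<and> (\<forall>a. (\<lambda>n. pmf (\<tau> (r n)) a) \<longlonglongrightarrow> pmf \<tau>0 a)"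
proof -
  define x where "x n = (\<chi> a. pmf (\<tau> n) a)" for n
  have "\<forall>n. x n \<in> cbox 0 1"
    by (auto simp: x_def mem_box_cart pmf_le_1)
  moreover have "seq_compact (cbox (0::real^'a) 1)"
    using compact_cbox compact_imp_seq_compact by blast
  ultimately obtain l r where l: "l \<in> cbox 0 1" and r: "strict_mono r" and lim: "(x \<circ> r) \<longlonglongrightarrow> l"
    unfolding seq_compact_def by metis
  have lima: "(\<lambda>n. pmf (\<tau> (r n)) a) \<longlonglongrightarrow> l $ a" for a
    using tendsto_vec_nth[OF lim, of a] by (simp add: x_def o_def)
  have nn: "0 \<le> l $ a" for a
    using l by (auto simp: mem_box_cart)
  have "(\<lambda>n. \<Sum>a\<in>UNIV. pmf (\<tau> (r n)) a) \<longlonglongrightarrow> (\<Sum>a\<in>UNIV. l $ a)"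
    by (intro tendsto_sum lima)
  moreover have "(\<Sum>a\<in>UNIV. pmf (\<tau> (r n)) a) = 1" for n
    by (rule sum_pmf_eq_1) auto
  ultimately have "(\<lambda>n. 1::real) \<longlonglongrightarrow> (\<Sum>a\<in>UNIV. l $ a)"
    by simp
  then have s1: "(\<Sum>a\<in>UNIV. l $ a) = 1"
    by (simp add: LIMSEQ_const_iff)
  have prob: "(\<integral>\<^sup>+a. ennreal (l $ a) \<partial>count_space UNIV) = 1"
  proof -
    have "(\<integral>\<^sup>+a. ennreal (l $ a) \<partial>count_space UNIV) = (\<Sum>a\<in>UNIV. ennreal (l $ a))"
      by (rule nn_integral_count_space_finite) simp
    also have "\<dots> = ennreal (\<Sum>a\<in>UNIV. l $ a)"
      using nn by (rule sum_ennreal)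
    finally show ?thesis using s1 by simp
  qed
  define \<tau>0 where "\<tau>0 = embed_pmf (\<lambda>a. l $ a)"
  have e: "pmf \<tau>0 a = l $ a" for a
    unfolding \<tau>0_def using pmf_embed_pmf[of "\<lambda>a. l $ a", OF nn prob] .
  show ?thesis using r lima e by (intro exI[of _ r] exI[of _ \<tau>0]) simp
qed



definition shift1 :: "(('a, 'b) hist \<Rightarrow> 'c) \<Rightarrow> 'a \<Rightarrow> 'b \<Rightarrow> ('a, 'b) hist \<Rightarrow> 'c" where
  "shift1 \<sigma> a b = (\<lambda>h. \<sigma> ((a, b) # h))"

lemma finite_len: "finite {h :: ('a::finite \<times> 'b::finite) list. length h = t}"
  using finite_lists_length_eq[of "UNIV :: ('a \<times> 'b) set" t] by simp

lemma hist_prob_snoc: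
  "hist_prob \<sigma>X \<sigma>Y (h @ [(a, b)]) = hist_prob \<sigma>X \<sigma>Y h * pmf (\<sigma>X h) a * pmf (\<sigma>Y h) b"
  by (simp add: hist_prob_def)

lemma hist_prob_Nil: "hist_prob \<sigma>X \<sigma>Y [] = 1"
  by (simp add: hist_prob_def)

lemma hist_prob_Cons:
  "hist_prob \<sigma>X \<sigma>Y ((a, b) # h) =
     pmf (\<sigma>X []) a * pmf (\<sigma>Y []) b * hist_prob (shift1 \<sigma>X a b) (shift1 \<sigma>Y a b) h"
proof (induction h rule: rev_induct)
  case Nil
  then show ?case by (simp add: hist_prob_def)
next
  case (snoc x h)
  obtain a' b' where x: "x = (a', b')" by (cases x)
  have "hist_prob \<sigma>X \<sigma>Y ((a, b) # h @ [x]) =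
        hist_prob \<sigma>X \<sigma>Y ((a, b) # h) * pmf (\<sigma>X ((a, b) # h)) a' * pmf (\<sigma>Y ((a, b) # h)) b'"
    using hist_prob_snoc[of \<sigma>X \<sigma>Y "(a, b) # h" a' b'] x by simp
  also have "\<dots> = pmf (\<sigma>X []) a * pmf (\<sigma>Y []) b * hist_prob (shift1 \<sigma>X a b) (shift1 \<sigma>Y a b) (h @ [x])"
    unfolding snoc x hist_prob_snoc by (simp add: shift1_def)
  finally show ?case .
qed

lemma hist_prob_rev_nonneg: "0 \<le> hist_prob_rev \<sigma>X \<sigma>Y h"
  by (induction \<sigma>X \<sigma>Y h rule: hist_prob_rev.induct) auto

lemma hist_prob_nonneg: "0 \<le> hist_prob \<sigma>X \<sigma>Y h"
  by (simp add: hist_prob_def hist_prob_rev_nonneg)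

lemma sum_UNIV_prod:
  "(\<Sum>x\<in>(UNIV :: ('a::finite \<times> 'b::finite) set). g x) = (\<Sum>a\<in>UNIV. \<Sum>b\<in>UNIV. g (a, b))"
proof -
  have "(\<Sum>x\<in>(UNIV :: ('a \<times> 'b) set). g x) = (\<Sum>x\<in>UNIV \<times> UNIV. g x)"
    by simp
  also have "\<dots> = (\<Sum>a\<in>UNIV. \<Sum>b\<in>UNIV. g (a, b))"
    by (simp add: sum.cartesian_product)
  finally show ?thesis .
qed

lemma sum_len_Suc:
  "(\<Sum>h\<in>{h :: ('a::finite \<times> 'b::finite) list. length h = Suc t}. f h) =
   (\<Sum>a\<in>UNIV. \<Sum>b\<in>UNIV. \<Sum>h\<in>{h. length h = t}. f ((a, b) # h))"
proof -
  have eq: "{h :: ('a \<times> 'b) list. length h = Suc t} = (\<lambda>(x, h). x # h) ` (UNIV \<times> {h. length h = t})"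
  proof (intro set_eqI iffI)
    fix h :: "('a \<times> 'b) list" assume "h \<in> {h. length h = Suc t}"
    then obtain x h' where "h = x # h'" "length h' = t" by (cases h) auto
    then show "h \<in> (\<lambda>(x, h). x # h) ` (UNIV \<times> {h. length h = t})" by force
  qed auto
  have inj: "inj_on (\<lambda>(x, h). x # h) (UNIV \<times> {h :: ('a \<times> 'b) list. length h = t})"
    by (auto simp: inj_on_def)
  have "(\<Sum>h\<in>{h :: ('a \<times> 'b) list. length h = Suc t}. f h) =
        (\<Sum>p\<in>UNIV \<times> {h. length h = t}. f ((\<lambda>(x, h). x # h) p))"
    unfolding eq using sum.reindex[OF inj, of f] by (simp add: o_def)
  also have "\<dots> = (\<Sum>x\<in>UNIV. \<Sum>h\<in>{h. length h = t}. f (x # h))"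
    by (simp add: sum.cartesian_product split_def)
  also have "\<dots> = (\<Sum>a\<in>UNIV. \<Sum>b\<in>UNIV. \<Sum>h\<in>{h. length h = t}. f ((a, b) # h))"
    by (rule sum_UNIV_prod)
  finally show ?thesis .
qed

lemma sum_hist_Suc:
  "(\<Sum>h\<in>{h :: ('a::finite \<times> 'b::finite) list. length h = Suc t}. hist_prob \<sigma>X \<sigma>Y h * g h) =
   (\<Sum>a\<in>UNIV. \<Sum>b\<in>UNIV. pmf (\<sigma>X []) a * pmf (\<sigma>Y []) b *
      (\<Sum>h\<in>{h. length h = t}. hist_prob (shift1 \<sigma>X a b) (shift1 \<sigma>Y a b) h * g ((a, b) # h)))"
  unfolding sum_len_Suc hist_prob_Cons
  by (simp add: sum_distrib_left mult.assoc)

lemma sum_pmf_UNIV: "(\<Sum>a\<in>(UNIV :: 'a::finite set). pmf p a) = 1"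
  by (rule sum_pmf_eq_1) auto

lemma sum_pmf_pmf: "(\<Sum>a\<in>(UNIV :: 'a::finite set). \<Sum>b\<in>(UNIV :: 'b::finite set). pmf p a * pmf q b) = 1"
  by (simp add: sum_distrib_left[symmetric] sum_pmf_UNIV)

lemma total_prob:
  "(\<Sum>h\<in>{h :: ('a::finite \<times> 'b::finite) list. length h = t}. hist_prob \<sigma>X \<sigma>Y h) = 1"
proof (induction t arbitrary: \<sigma>X \<sigma>Y)
  case 0
  have "{h :: ('a \<times> 'b) list. length h = 0} = {[]}" by auto
  then show ?case by (simp add: hist_prob_Nil)
next
  case (Suc t)
  have "(\<Sum>h\<in>{h :: ('a \<times> 'b) list. length h = Suc t}. hist_prob \<sigma>X \<sigma>Y h * 1) =
     (\<Sum>a\<in>UNIV. \<Sum>b\<in>UNIV. pmf (\<sigma>X []) a * pmf (\<sigma>Y []) b *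
      (\<Sum>h\<in>{h. length h = t}. hist_prob (shift1 \<sigma>X a b) (shift1 \<sigma>Y a b) h * 1))"
    by (rule sum_hist_Suc)
  also have "\<dots> = 1"
    using Suc.IH by (simp add: sum_pmf_pmf)
  finally show ?case by simp
qed

definition inner_pay :: "('a::finite \<Rightarrow> 'b::finite \<Rightarrow> real) \<Rightarrow> 'a pmf \<Rightarrow> 'b pmf \<Rightarrow> real" where
  "inner_pay phi p q = (\<Sum>a\<in>UNIV. \<Sum>b\<in>UNIV. pmf p a * pmf q b * phi a b)"

lemma stage_payoff_alt:
  fixes phi :: "'a::finite \<Rightarrow> 'b::finite \<Rightarrow> real"
  shows "stage_payoff phi \<sigma>X \<sigma>Y t =
     (\<Sum>h\<in>{h :: ('a, 'b) hist. length h = t}. hist_prob \<sigma>X \<sigma>Y h * inner_pay phi (\<sigma>X h) (\<sigma>Y h))"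
  by (simp add: stage_payoff_def inner_pay_def)

lemma stage_0:
  fixes phi :: "'a::finite \<Rightarrow> 'b::finite \<Rightarrow> real"
  shows "stage_payoff phi \<sigma>X \<sigma>Y 0 = inner_pay phi (\<sigma>X []) (\<sigma>Y [])"
proof -
  have "{h :: ('a \<times> 'b) list. length h = 0} = {[]}" by auto
  then show ?thesis by (simp add: stage_payoff_alt hist_prob_Nil)
qed

lemma stage_Suc:
  fixes phi :: "'a::finite \<Rightarrow> 'b::finite \<Rightarrow> real"
  shows "stage_payoff phi \<sigma>X \<sigma>Y (Suc t) =
   (\<Sum>a\<in>UNIV. \<Sum>b\<in>UNIV. pmf (\<sigma>X []) a * pmf (\<sigma>Y []) b *
      stage_payoff phi (shift1 \<sigma>X a b) (shift1 \<sigma>Y a b) t)"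
  unfolding stage_payoff_alt sum_hist_Suc by (simp add: shift1_def)

definition bnd :: "('a::finite \<Rightarrow> 'b::finite \<Rightarrow> real) \<Rightarrow> real" where
  "bnd phi = (\<Sum>a\<in>UNIV. \<Sum>b\<in>UNIV. \<bar>phi a b\<bar>)"

lemma inner_pay_bound:
  fixes phi :: "'a::finite \<Rightarrow> 'b::finite \<Rightarrow> real"
  shows "\<bar>inner_pay phi p q\<bar> \<le> bnd phi"
proof -
  have "\<bar>inner_pay phi p q\<bar> \<le> (\<Sum>a\<in>UNIV. \<bar>\<Sum>b\<in>UNIV. pmf p a * pmf q b * phi a b\<bar>)"
    unfolding inner_pay_def by (rule sum_abs)
  also have "\<dots> \<le> (\<Sum>a\<in>UNIV. \<Sum>b\<in>UNIV. \<bar>pmf p a * pmf q b * phi a b\<bar>)"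
    by (intro sum_mono sum_abs)
  also have "\<dots> \<le> (\<Sum>a\<in>UNIV. \<Sum>b\<in>UNIV. \<bar>phi a b\<bar>)"
  proof (intro sum_mono)
    fix a b
    have "pmf p a * pmf q b \<le> 1"
      using pmf_le_1[of p a] pmf_le_1[of q b] pmf_nonneg[of p a] pmf_nonneg[of q b]
      by (simp add: mult_le_one)
    then show "\<bar>pmf p a * pmf q b * phi a b\<bar> \<le> \<bar>phi a b\<bar>"
      by (simp add: abs_mult mult_left_le_one_le)
  qed
  finally show ?thesis by (simp add: bnd_def)
qed

lemma stage_bound:
  fixes phi :: "'a::finite \<Rightarrow> 'b::finite \<Rightarrow> real"
  shows "\<bar>stage_payoff phi \<sigma>X \<sigma>Y t\<bar> \<le> bnd phi"
proof -
  have "\<bar>stage_payoff phi \<sigma>X \<sigma>Y t\<bar> \<le>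
        (\<Sum>h\<in>{h :: ('a, 'b) hist. length h = t}. \<bar>hist_prob \<sigma>X \<sigma>Y h * inner_pay phi (\<sigma>X h) (\<sigma>Y h)\<bar>)"
    unfolding stage_payoff_alt by (rule sum_abs)
  also have "\<dots> \<le> (\<Sum>h\<in>{h :: ('a, 'b) hist. length h = t}. hist_prob \<sigma>X \<sigma>Y h * bnd phi)"
    by (intro sum_mono) (simp add: abs_mult hist_prob_nonneg mult_left_mono inner_pay_bound)
  also have "\<dots> = bnd phi"
    by (simp add: sum_distrib_right[symmetric] total_prob)
  finally show ?thesis .
qed



lemma summable_disc:
  fixes phi :: "'a::finite \<Rightarrow> 'b::finite \<Rightarrow> real"
  assumes "0 \<le> lam" "lam < 1"
  shows "summable (\<lambda>t. lam ^ t * stage_payoff phi \<sigma>X \<sigma>Y t)"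
proof (rule summable_comparison_test')
  show "summable (\<lambda>t. bnd phi * lam ^ t)"
    using assms by (intro summable_mult summable_geometric) simp
  fix t :: nat
  show "norm (lam ^ t * stage_payoff phi \<sigma>X \<sigma>Y t) \<le> bnd phi * lam ^ t"
    using stage_bound[of phi \<sigma>X \<sigma>Y t] assms
    by (simp add: abs_mult mult.commute[of _ "lam ^ t"] mult_left_mono)
qed

lemma disc_bound:
  fixes phi :: "'a::finite \<Rightarrow> 'b::finite \<Rightarrow> real"
  assumes "0 \<le> lam" "lam < 1"
  shows "\<bar>disc_payoff phi lam \<sigma>X \<sigma>Y\<bar> \<le> bnd phi"
proof -
  let ?f = "\<lambda>t. lam ^ t * stage_payoff phi \<sigma>X \<sigma>Y t"
  have sg: "summable (\<lambda>t. bnd phi * lam ^ t)"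
    using assms by (intro summable_mult summable_geometric) simp
  have sg2: "summable (\<lambda>t. - (bnd phi * lam ^ t))"
    using sg by (rule summable_minus)
  have gs: "(\<Sum>t. bnd phi * lam ^ t) = bnd phi / (1 - lam)"
    using assms by (simp add: suminf_mult summable_geometric suminf_geometric)
  have b: "\<bar>?f t\<bar> \<le> bnd phi * lam ^ t" for t
    using stage_bound[of phi \<sigma>X \<sigma>Y t] assms
    by (simp add: abs_mult mult.commute[of _ "lam ^ t"] mult_left_mono)
  have up: "suminf ?f \<le> bnd phi / (1 - lam)"
    unfolding gs[symmetric] using b summable_disc[OF assms] sg
    by (intro suminf_le) (auto simp: abs_le_iff)
  have lo: "- (bnd phi / (1 - lam)) \<le> suminf ?f"
  proof -
    have "(\<Sum>t. - (bnd phi * lam ^ t)) \<le> suminf ?f"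
      using summable_disc[OF assms] sg2
    proof (intro suminf_le)
      fix n show "- (bnd phi * lam ^ n) \<le> ?f n" using b[of n] by (simp add: abs_le_iff)
    qed auto
    then show ?thesis using suminf_minus[OF sg] gs by simp
  qed
  have "\<bar>suminf ?f\<bar> \<le> bnd phi / (1 - lam)" using up lo by simp
  then have "(1 - lam) * \<bar>suminf ?f\<bar> \<le> bnd phi"
    using assms by (simp add: field_simps)
  then show ?thesis using assms by (simp add: disc_payoff_def abs_mult)
qed

lemma disc_step:
  fixes phi :: "'a::finite \<Rightarrow> 'b::finite \<Rightarrow> real"
  assumes "0 \<le> lam" "lam < 1"
  shows "disc_payoff phi lam \<sigma>X \<sigma>Y =
     (1 - lam) * inner_pay phi (\<sigma>X []) (\<sigma>Y []) +
     lam * (\<Sum>a\<in>UNIV. \<Sum>b\<in>UNIV. pmf (\<sigma>X []) a * pmf (\<sigma>Y []) b *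
        disc_payoff phi lam (shift1 \<sigma>X a b) (shift1 \<sigma>Y a b))"
proof -
  let ?f = "\<lambda>t. lam ^ t * stage_payoff phi \<sigma>X \<sigma>Y t"
  let ?g = "\<lambda>a b t. lam ^ t * stage_payoff phi (shift1 \<sigma>X a b) (shift1 \<sigma>Y a b) t"
  let ?c = "\<lambda>a b. pmf (\<sigma>X []) a * pmf (\<sigma>Y []) b"
  have sf: "summable ?f" by (rule summable_disc[OF assms])
  have sg: "summable (?g a b)" for a b by (rule summable_disc[OF assms])
  have "suminf ?f = ?f 0 + (\<Sum>t. ?f (Suc t))"
    using suminf_split_head[OF sf] by simp
  also have "(\<Sum>t. ?f (Suc t)) = (\<Sum>t. lam * (\<Sum>a\<in>UNIV. \<Sum>b\<in>UNIV. ?c a b * ?g a b t))"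
    by (simp add: stage_Suc sum_distrib_left mult_ac)
  also have "\<dots> = lam * (\<Sum>t. \<Sum>a\<in>UNIV. \<Sum>b\<in>UNIV. ?c a b * ?g a b t)"
  proof (rule suminf_mult)
    show "summable (\<lambda>t. \<Sum>a\<in>UNIV. \<Sum>b\<in>UNIV. ?c a b * ?g a b t)"
      using sg by (intro summable_sum summable_mult)
  qed
  also have "(\<Sum>t. \<Sum>a\<in>UNIV. \<Sum>b\<in>UNIV. ?c a b * ?g a b t) = (\<Sum>a\<in>UNIV. \<Sum>t. \<Sum>b\<in>UNIV. ?c a b * ?g a b t)"
    using sg by (intro suminf_sum summable_sum summable_mult)
  also have "\<dots> = (\<Sum>a\<in>UNIV. \<Sum>b\<in>UNIV. \<Sum>t. ?c a b * ?g a b t)"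
    using sg by (intro sum.cong refl suminf_sum summable_mult)
  also have "\<dots> = (\<Sum>a\<in>UNIV. \<Sum>b\<in>UNIV. ?c a b * suminf (?g a b))"
    using sg by (intro sum.cong refl suminf_mult)
  finally have "suminf ?f = stage_payoff phi \<sigma>X \<sigma>Y 0 + lam * (\<Sum>a\<in>UNIV. \<Sum>b\<in>UNIV. ?c a b * suminf (?g a b))"
    by simp
  then have "(1 - lam) * suminf ?f = (1 - lam) * inner_pay phi (\<sigma>X []) (\<sigma>Y []) +
      lam * (\<Sum>a\<in>UNIV. \<Sum>b\<in>UNIV. ?c a b * ((1 - lam) * suminf (?g a b)))"
    by (simp add: stage_0 algebra_simps sum_distrib_left)
  then show ?thesis by (simp add: disc_payoff_def)
qed



lemma phi_mix_sum:
  fixes phi :: "'a::finite \<Rightarrow> 'b \<Rightarrow> real"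
  shows "phi_mix phi \<tau> b = (\<Sum>a\<in>UNIV. pmf \<tau> a * phi a b)"
  unfolding phi_mix_def
  by (subst integral_measure_pmf_real[of UNIV]) (auto simp: mult.commute)

lemma inner_pay_alt:
  "inner_pay phi p q = (\<Sum>b\<in>UNIV. pmf q b * phi_mix phi p b)"
  unfolding inner_pay_def phi_mix_sum
  by (subst sum.swap) (simp add: sum_distrib_left mult_ac)

lemma sum_pmf_collapse:
  fixes g :: "'b::finite \<Rightarrow> real"
  shows "(\<Sum>a\<in>(UNIV::'a::finite set). \<Sum>b\<in>UNIV. pmf p a * pmf q b * g b) = (\<Sum>b\<in>UNIV. pmf q b * g b)"
proof -
  have "(\<Sum>a\<in>(UNIV::'a set). \<Sum>b\<in>UNIV. pmf p a * pmf q b * g b) =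
        (\<Sum>b\<in>UNIV. (\<Sum>a\<in>(UNIV::'a set). pmf p a) * (pmf q b * g b))"
    by (subst sum.swap) (simp add: sum_distrib_right sum_distrib_left mult_ac)
  then show ?thesis by (simp add: sum_pmf_UNIV)
qed

lemma minY_le: "minY phi \<tau> \<le> phi_mix phi \<tau> b"
  unfolding minY_def by (rule Min_le) auto

lemma maxY_ge: "phi_mix phi \<tau> b \<le> maxY phi \<tau>"
  unfolding maxY_def by (rule Max_ge) auto

lemma minY_ex: "\<exists>b. minY phi \<tau> = phi_mix phi \<tau> b"
proof -
  have "minY phi \<tau> \<in> range (phi_mix phi \<tau>)"
    unfolding minY_def by (rule Min_in) auto
  then show ?thesis by auto
qed

lemma maxY_ex: "\<exists>b. maxY phi \<tau> = phi_mix phi \<tau> b"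
proof -
  have "maxY phi \<tau> \<in> range (phi_mix phi \<tau>)"
    unfolding maxY_def by (rule Max_in) auto
  then show ?thesis by auto
qed

lemma minY_ge_iff: "c \<le> minY phi \<tau> \<longleftrightarrow> (\<forall>b. c \<le> phi_mix phi \<tau> b)"
  using minY_le minY_ex by (metis order_trans)

lemma maxY_le_iff: "maxY phi \<tau> \<le> c \<longleftrightarrow> (\<forall>b. phi_mix phi \<tau> b \<le> c)"
  using maxY_ge maxY_ex by (metis order_trans)

definition mixp :: "real \<Rightarrow> 'a pmf \<Rightarrow> 'a pmf \<Rightarrow> 'a pmf" where
  "mixp p tp tm = embed_pmf (\<lambda>a. p * pmf tp a + (1 - p) * pmf tm a)"

lemma pmf_mixp:
  fixes tp tm :: "'a::finite pmf"
  assumes "0 \<le> p" "p \<le> 1"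
  shows "pmf (mixp p tp tm) a = p * pmf tp a + (1 - p) * pmf tm a"
proof -
  let ?f = "\<lambda>a. p * pmf tp a + (1 - p) * pmf tm a"
  have nn: "0 \<le> ?f a" for a using assms by simp
  have s: "(\<Sum>a\<in>UNIV. ?f a) = 1"
    by (simp add: sum.distrib sum_distrib_left[symmetric] sum_pmf_UNIV)
  have prob: "(\<integral>\<^sup>+a. ennreal (?f a) \<partial>count_space UNIV) = 1"
  proof -
    have "(\<integral>\<^sup>+a. ennreal (?f a) \<partial>count_space UNIV) = (\<Sum>a\<in>UNIV. ennreal (?f a))"
      by (rule nn_integral_count_space_finite) simp
    also have "\<dots> = ennreal (\<Sum>a\<in>UNIV. ?f a)"
      using nn by (rule sum_ennreal)
    finally show ?thesis using s by simp
  qed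
  show ?thesis unfolding mixp_def using pmf_embed_pmf[of ?f, OF nn prob] .
qed

lemma phi_mix_mixp:
  fixes tp tm :: "'a::finite pmf"
  assumes "0 \<le> p" "p \<le> 1"
  shows "phi_mix phi (mixp p tp tm) b = p * phi_mix phi tp b + (1 - p) * phi_mix phi tm b"
proof -
  have "(\<Sum>a\<in>UNIV. (p * pmf tp a + (1 - p) * pmf tm a) * phi a b) =
        (\<Sum>a\<in>UNIV. p * (pmf tp a * phi a b) + (1 - p) * (pmf tm a * phi a b))"
    by (simp add: algebra_simps)
  also have "\<dots> = p * (\<Sum>a\<in>UNIV. pmf tp a * phi a b) + (1 - p) * (\<Sum>a\<in>UNIV. pmf tm a * phi a b)"
    by (simp add: sum.distrib sum_distrib_left)
  finally show ?thesis unfolding phi_mix_sum pmf_mixp[OF assms] .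
qed



definition good :: "('a::finite \<Rightarrow> 'b::finite \<Rightarrow> real) \<Rightarrow> real \<Rightarrow> 'a pmf \<Rightarrow> 'a pmf \<Rightarrow> bool" where
  "good phi lam tp tm \<longleftrightarrow> (\<forall>b. 0 \<le> phi_mix phi tp b) \<and> (\<forall>b. phi_mix phi tm b \<le> 0) \<and>
     (\<forall>b1 b2 b3. (1 - lam) * phi_mix phi tp b1 + lam * phi_mix phi tm b2 \<le> phi_mix phi tp b3) \<and>
     (\<forall>b1 b2 b3. phi_mix phi tm b1 \<le> (1 - lam) * phi_mix phi tm b2 + lam * phi_mix phi tp b3)"

definition pch :: "('a::finite \<Rightarrow> 'b::finite \<Rightarrow> real) \<Rightarrow> real \<Rightarrow> 'a pmf \<Rightarrow> 'a pmf \<Rightarrow> real \<Rightarrow> real" where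
  "pch phi lam tp tm v = (if maxY phi tm < maxY phi tp
     then min 1 ((v - maxY phi tm) / ((1 - lam) * (maxY phi tp - maxY phi tm))) else 1)"

definition tch :: "('a::finite \<Rightarrow> 'b::finite \<Rightarrow> real) \<Rightarrow> real \<Rightarrow> 'a pmf \<Rightarrow> 'a pmf \<Rightarrow> real \<Rightarrow> 'a pmf" where
  "tch phi lam tp tm v = mixp (pch phi lam tp tm v) tp tm"

definition upd :: "('a::finite \<Rightarrow> 'b::finite \<Rightarrow> real) \<Rightarrow> real \<Rightarrow> 'a pmf \<Rightarrow> 'a pmf \<Rightarrow> real \<Rightarrow> 'b \<Rightarrow> real" where
  "upd phi lam tp tm v b = (v - (1 - lam) * phi_mix phi (tch phi lam tp tm v) b) / lam"

definition vfold :: "('a::finite \<Rightarrow> 'b::finite \<Rightarrow> real) \<Rightarrow> real \<Rightarrow> 'a pmf \<Rightarrow> 'a pmf \<Rightarrow> real \<Rightarrow> ('a, 'b) hist \<Rightarrow> real" where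
  "vfold phi lam tp tm v h = foldl (\<lambda>v x. upd phi lam tp tm v (snd x)) v h"

definition strat :: "('a::finite \<Rightarrow> 'b::finite \<Rightarrow> real) \<Rightarrow> real \<Rightarrow> 'a pmf \<Rightarrow> 'a pmf \<Rightarrow> real \<Rightarrow> ('a, 'b) hist \<Rightarrow> 'a pmf" where
  "strat phi lam tp tm v = (\<lambda>h. tch phi lam tp tm (vfold phi lam tp tm v h))"

lemma shift1_strat: "shift1 (strat phi lam tp tm v) a b = strat phi lam tp tm (upd phi lam tp tm v b)"
  by (simp add: shift1_def strat_def vfold_def)

lemma strat_Nil: "strat phi lam tp tm v [] = tch phi lam tp tm v"
  by (simp add: strat_def vfold_def)

context
  fixes phi :: "'a::finite \<Rightarrow> 'b::finite \<Rightarrow> real" and lam :: real and tp tm :: "'a pmf"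
  assumes lam0: "0 \<le> lam" and lam1: "lam < 1" and gd: "good phi lam tp tm"
begin

lemma good_facts:
  "maxY phi tm \<le> 0" "0 \<le> minY phi tp"
  "(1 - lam) * maxY phi tp + lam * maxY phi tm \<le> minY phi tp"
  "maxY phi tm \<le> (1 - lam) * minY phi tm + lam * minY phi tp"
proof -
  obtain b1 where b1: "maxY phi tp = phi_mix phi tp b1" using maxY_ex by blast
  obtain b2 where b2: "maxY phi tm = phi_mix phi tm b2" using maxY_ex by blast
  obtain b3 where b3: "minY phi tp = phi_mix phi tp b3" using minY_ex by blast
  obtain b4 where b4: "minY phi tm = phi_mix phi tm b4" using minY_ex by blast
  show "maxY phi tm \<le> 0" using gd b2 by (simp add: good_def)
  show "0 \<le> minY phi tp" using gd b3 by (simp add: good_def)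
  show "(1 - lam) * maxY phi tp + lam * maxY phi tm \<le> minY phi tp"
    using gd b1 b2 b3 unfolding good_def by metis
  show "maxY phi tm \<le> (1 - lam) * minY phi tm + lam * minY phi tp"
    using gd b2 b4 b3 unfolding good_def by metis
qed

lemma pch_range:
  assumes "maxY phi tm \<le> v"
  shows "0 \<le> pch phi lam tp tm v" "pch phi lam tp tm v \<le> 1"
  using assms lam1 by (auto simp: pch_def)

lemma key:
  assumes v1: "maxY phi tm \<le> v" and v2: "v \<le> minY phi tp"
  shows "v - lam * minY phi tp \<le> (1 - lam) * phi_mix phi (tch phi lam tp tm v) b"
    and "(1 - lam) * phi_mix phi (tch phi lam tp tm v) b \<le> v - lam * maxY phi tm"
proof -
  define p where "p = pch phi lam tp tm v"
  define Lo where "Lo = maxY phi tm"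
  define Up where "Up = minY phi tp"
  define Mp where "Mp = maxY phi tp"
  define mm where "mm = minY phi tm"
  have p0: "0 \<le> p" and p1: "p \<le> 1" using pch_range[OF v1] by (auto simp: p_def)
  have f1: "(1 - lam) * Mp + lam * Lo \<le> Up" and f2: "Lo \<le> (1 - lam) * mm + lam * Up"
    using good_facts by (auto simp: Lo_def Up_def Mp_def mm_def)
  have l1: "0 < 1 - lam" using lam1 by simp
  have left: "(1 - lam) * (p * Mp + (1 - p) * Lo) + lam * Lo \<le> v"
  proof (cases "Lo < Mp")
    case True
    define q where "q = (v - Lo) / ((1 - lam) * (Mp - Lo))"
    have pq: "p = min 1 q" using True by (simp add: p_def pch_def q_def Lo_def Mp_def)
    have d: "0 < (1 - lam) * (Mp - Lo)" using True l1 by simp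
    have "(1 - lam) * (p * Mp + (1 - p) * Lo) + lam * Lo = Lo + p * ((1 - lam) * (Mp - Lo))"
      by (simp add: algebra_simps)
    also have "\<dots> \<le> Lo + q * ((1 - lam) * (Mp - Lo))"
      using pq d by (intro add_left_mono mult_right_mono) auto
    also have "\<dots> = v"
    proof -
      define D where "D = (1 - lam) * (Mp - Lo)"
      have "D \<noteq> 0" using d unfolding D_def by (metis less_irrefl)
      then have "(v - Lo) / D * D = v - Lo" by simp
      then show ?thesis by (simp add: q_def D_def)
    qed
    finally show ?thesis .
  next
    case False
    then have "p = 1" by (simp add: p_def pch_def Lo_def Mp_def)
    have "(1 - lam) * Mp \<le> (1 - lam) * Lo"
      using False l1 by (intro mult_left_mono) auto
    then show ?thesis using \<open>p = 1\<close> v1 Lo_def by (simp add: algebra_simps)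
  qed
  have right: "v \<le> (1 - lam) * (p * Up + (1 - p) * mm) + lam * Up"
  proof (cases "p = 1")
    case True then show ?thesis using v2 Up_def by (simp add: algebra_simps)
  next
    case False
    then have T: "Lo < Mp" unfolding p_def pch_def Lo_def Mp_def by (auto split: if_splits)
    define q where "q = (v - Lo) / ((1 - lam) * (Mp - Lo))"
    have pq: "p = min 1 q" using T by (simp add: p_def pch_def q_def Lo_def Mp_def)
    then have "p = q" using False by (auto simp: min_def split: if_splits)
    have d: "0 < (1 - lam) * (Mp - Lo)" using T l1 by simp
    have lv: "(1 - lam) * (p * Mp + (1 - p) * Lo) + lam * Lo = v"
    proof -
      have "(1 - lam) * (p * Mp + (1 - p) * Lo) + lam * Lo = Lo + q * ((1 - lam) * (Mp - Lo))"
        using \<open>p = q\<close> by (simp add: algebra_simps)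
      also have "\<dots> = v"
    proof -
      define D where "D = (1 - lam) * (Mp - Lo)"
      have "D \<noteq> 0" using d unfolding D_def by (metis less_irrefl)
      then have "(v - Lo) / D * D = v - Lo" by simp
      then show ?thesis by (simp add: q_def D_def)
    qed
      finally show ?thesis .
    qed
    have g0: "0 \<le> (1 - lam) * mm + lam * Up - Lo" using f2 by simp
    have g1: "0 \<le> Up - (1 - lam) * Mp - lam * Lo" using f1 by simp
    have "((1 - lam) * (p * Up + (1 - p) * mm) + lam * Up) - ((1 - lam) * (p * Mp + (1 - p) * Lo) + lam * Lo)
        = (1 - p) * ((1 - lam) * mm + lam * Up - Lo) + p * (Up - (1 - lam) * Mp - lam * Lo)"
      by (simp add: algebra_simps)
    also have "\<dots> \<ge> 0" using g0 g1 p0 p1 by simp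
    finally show ?thesis using lv by simp
  qed
  have pm: "phi_mix phi (tch phi lam tp tm v) b = p * phi_mix phi tp b + (1 - p) * phi_mix phi tm b"
    unfolding tch_def p_def[symmetric] by (rule phi_mix_mixp[OF p0 p1])
  have bp1: "phi_mix phi tp b \<le> Mp" and bp2: "Up \<le> phi_mix phi tp b"
    using maxY_ge minY_le by (auto simp: Mp_def Up_def)
  have bm1: "phi_mix phi tm b \<le> Lo" and bm2: "mm \<le> phi_mix phi tm b"
    using maxY_ge minY_le by (auto simp: Lo_def mm_def)
  have u: "p * phi_mix phi tp b + (1 - p) * phi_mix phi tm b \<le> p * Mp + (1 - p) * Lo"
    using p0 p1 bp1 bm1 by (intro add_mono mult_left_mono) auto
  have w: "p * Up + (1 - p) * mm \<le> p * phi_mix phi tp b + (1 - p) * phi_mix phi tm b"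
    using p0 p1 bp2 bm2 by (intro add_mono mult_left_mono) auto
  show "v - lam * minY phi tp \<le> (1 - lam) * phi_mix phi (tch phi lam tp tm v) b"
  proof -
    have "(1 - lam) * (p * Up + (1 - p) * mm) \<le> (1 - lam) * (p * phi_mix phi tp b + (1 - p) * phi_mix phi tm b)"
      using w l1 by (intro mult_left_mono) auto
    then show ?thesis using right unfolding pm Up_def by linarith
  qed
  show "(1 - lam) * phi_mix phi (tch phi lam tp tm v) b \<le> v - lam * maxY phi tm"
  proof -
    have "(1 - lam) * (p * phi_mix phi tp b + (1 - p) * phi_mix phi tm b) \<le> (1 - lam) * (p * Mp + (1 - p) * Lo)"
      using u l1 by (intro mult_left_mono) auto
    then show ?thesis using left unfolding pm Lo_def by linarith
  qed
qed

lemma upd_props: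
  assumes v1: "maxY phi tm \<le> v" and v2: "v \<le> minY phi tp"
  shows "maxY phi tm \<le> upd phi lam tp tm v b" "upd phi lam tp tm v b \<le> minY phi tp"
    "(1 - lam) * phi_mix phi (tch phi lam tp tm v) b + lam * upd phi lam tp tm v b = v"
proof -
  note k = key[OF v1 v2, of b]
  have gf: "maxY phi tm \<le> 0" "0 \<le> minY phi tp" using good_facts by auto
  show "maxY phi tm \<le> upd phi lam tp tm v b"
  proof (cases "lam = 0")
    case True then show ?thesis using gf by (simp add: upd_def)
  next
    case False then have "0 < lam" using lam0 by simp
    then show ?thesis using k by (simp add: upd_def pos_le_divide_eq algebra_simps)
  qed
  show "upd phi lam tp tm v b \<le> minY phi tp"
  proof (cases "lam = 0")
    case True then show ?thesis using gf by (simp add: upd_def)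
  next
    case False then have "0 < lam" using lam0 by simp
    then show ?thesis using k by (simp add: upd_def pos_divide_le_eq algebra_simps)
  qed
  show "(1 - lam) * phi_mix phi (tch phi lam tp tm v) b + lam * upd phi lam tp tm v b = v"
  proof (cases "lam = 0")
    case True then show ?thesis using k by simp
  next
    case False then show ?thesis by (simp add: upd_def)
  qed
qed

end



lemma abs_double_sum_le:
  fixes X :: "'a::finite \<Rightarrow> 'b::finite \<Rightarrow> real"
  assumes "\<And>a b. \<bar>X a b\<bar> \<le> E"
  shows "\<bar>\<Sum>a\<in>UNIV. \<Sum>b\<in>UNIV. pmf p a * pmf q b * X a b\<bar> \<le> E"
proof -
  have "\<bar>\<Sum>a\<in>UNIV. \<Sum>b\<in>UNIV. pmf p a * pmf q b * X a b\<bar> \<le> (\<Sum>a\<in>UNIV. \<bar>\<Sum>b\<in>UNIV. pmf p a * pmf q b * X a b\<bar>)"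
    by (rule sum_abs)
  also have "\<dots> \<le> (\<Sum>a\<in>UNIV. \<Sum>b\<in>UNIV. \<bar>pmf p a * pmf q b * X a b\<bar>)"
    by (intro sum_mono sum_abs)
  also have "\<dots> \<le> (\<Sum>a\<in>UNIV. \<Sum>b\<in>UNIV. pmf p a * pmf q b * E)"
    using assms by (intro sum_mono) (simp add: abs_mult mult_left_mono)
  also have "\<dots> = (\<Sum>a\<in>UNIV. \<Sum>b\<in>UNIV. pmf p a * pmf q b) * E"
    by (simp add: sum_distrib_right)
  also have "\<dots> = E" by (simp add: sum_pmf_pmf)
  finally show ?thesis .
qed

context
  fixes phi :: "'a::finite \<Rightarrow> 'b::finite \<Rightarrow> real" and lam :: real and tp tm :: "'a pmf"
  assumes lam0: "0 \<le> lam" and lam1: "lam < 1" and gd: "good phi lam tp tm"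
begin

lemma strat_value:
  assumes "maxY phi tm \<le> v0" "v0 \<le> minY phi tp"
  shows "disc_payoff phi lam (strat phi lam tp tm v0) \<sigma>Y0 = v0"
proof -
  define Lo where "Lo = maxY phi tm"
  define Up where "Up = minY phi tp"
  have L0: "Lo \<le> 0" and U0: "0 \<le> Up" using good_facts[OF lam0 lam1 gd] by (auto simp: Lo_def Up_def)
  define Es where "Es = {\<bar>disc_payoff phi lam (strat phi lam tp tm v) \<sigma>Y - v\<bar> | v \<sigma>Y. Lo \<le> v \<and> v \<le> Up}"
  have bdd: "bdd_above Es"
  proof (rule bdd_aboveI)
    fix x assume "x \<in> Es"
    then obtain v \<sigma>Y where x: "x = \<bar>disc_payoff phi lam (strat phi lam tp tm v) \<sigma>Y - v\<bar>" and v: "Lo \<le> v" "v \<le> Up"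
      unfolding Es_def by blast
    have "\<bar>disc_payoff phi lam (strat phi lam tp tm v) \<sigma>Y\<bar> \<le> bnd phi"
      by (rule disc_bound[OF lam0 lam1])
    then show "x \<le> bnd phi + (Up - Lo)" using x v L0 U0 by (simp add: abs_le_iff)
  qed
  define E where "E = Sup Es"
  have upper: "x \<le> E" if "x \<in> Es" for x
    unfolding E_def using that bdd by (rule cSup_upper)
  have step: "x \<le> lam * E" if "x \<in> Es" for x
  proof -
    obtain v \<sigma>Y where x: "x = \<bar>disc_payoff phi lam (strat phi lam tp tm v) \<sigma>Y - v\<bar>" and v: "Lo \<le> v" "v \<le> Up"
      using \<open>x \<in> Es\<close> unfolding Es_def by blast
    define \<tau> where "\<tau> = tch phi lam tp tm v"
    define q where "q = \<sigma>Y []"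
    define u where "u b = upd phi lam tp tm v b" for b
    define d where "d a b = disc_payoff phi lam (strat phi lam tp tm (u b)) (shift1 \<sigma>Y a b)" for a b
    have ds: "disc_payoff phi lam (strat phi lam tp tm v) \<sigma>Y =
       (1 - lam) * inner_pay phi \<tau> q + lam * (\<Sum>a\<in>UNIV. \<Sum>b\<in>UNIV. pmf \<tau> a * pmf q b * d a b)"
      using disc_step[OF lam0 lam1, of phi "strat phi lam tp tm v" \<sigma>Y]
      by (simp add: strat_Nil shift1_strat \<tau>_def q_def d_def u_def)
    have A: "(\<Sum>a\<in>UNIV. \<Sum>b\<in>UNIV. pmf \<tau> a * pmf q b * d a b) =
        (\<Sum>a\<in>UNIV. \<Sum>b\<in>UNIV. pmf \<tau> a * pmf q b * (d a b - u b)) + (\<Sum>b\<in>UNIV. pmf q b * u b)"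
    proof -
      have "(\<Sum>a\<in>UNIV. \<Sum>b\<in>UNIV. pmf \<tau> a * pmf q b * (d a b - u b)) =
            (\<Sum>a\<in>UNIV. \<Sum>b\<in>UNIV. pmf \<tau> a * pmf q b * d a b) - (\<Sum>a\<in>UNIV. \<Sum>b\<in>UNIV. pmf \<tau> a * pmf q b * u b)"
        by (simp add: right_diff_distrib sum_subtractf)
      then show ?thesis by (simp add: sum_pmf_collapse)
    qed
    have uv: "(1 - lam) * phi_mix phi \<tau> b + lam * u b = v" for b
      using upd_props(3)[OF lam0 lam1 gd, of v b] v by (simp add: \<tau>_def u_def Lo_def Up_def)
    have B: "(1 - lam) * inner_pay phi \<tau> q + lam * (\<Sum>b\<in>UNIV. pmf q b * u b) = v"
    proof -
      have "(\<Sum>b\<in>UNIV. pmf q b * ((1 - lam) * phi_mix phi \<tau> b + lam * u b)) =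
            (\<Sum>b\<in>UNIV. (1 - lam) * (pmf q b * phi_mix phi \<tau> b) + lam * (pmf q b * u b))"
        by (rule sum.cong) (auto simp: algebra_simps)
      also have "\<dots> = (1 - lam) * (\<Sum>b\<in>UNIV. pmf q b * phi_mix phi \<tau> b) + lam * (\<Sum>b\<in>UNIV. pmf q b * u b)"
        by (simp add: sum.distrib sum_distrib_left)
      finally have "(1 - lam) * inner_pay phi \<tau> q + lam * (\<Sum>b\<in>UNIV. pmf q b * u b) =
            (\<Sum>b\<in>UNIV. pmf q b * ((1 - lam) * phi_mix phi \<tau> b + lam * u b))"
        by (simp add: inner_pay_alt)
      also have "\<dots> = (\<Sum>b\<in>UNIV. pmf q b) * v"
        by (simp add: uv sum_distrib_right)
      finally show ?thesis by (simp add: sum_pmf_UNIV)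
    qed
    have diff: "disc_payoff phi lam (strat phi lam tp tm v) \<sigma>Y - v =
        lam * (\<Sum>a\<in>UNIV. \<Sum>b\<in>UNIV. pmf \<tau> a * pmf q b * (d a b - u b))"
      using ds A B by (simp add: algebra_simps)
    have inE: "\<bar>d a b - u b\<bar> \<le> E" for a b
    proof (rule upper)
      have "Lo \<le> u b" "u b \<le> Up"
        using upd_props(1,2)[OF lam0 lam1 gd, of v b] v by (auto simp: u_def Lo_def Up_def)
      then show "\<bar>d a b - u b\<bar> \<in> Es" unfolding Es_def d_def by blast
    qed
    have "\<bar>\<Sum>a\<in>UNIV. \<Sum>b\<in>UNIV. pmf \<tau> a * pmf q b * (d a b - u b)\<bar> \<le> E"
      by (rule abs_double_sum_le) (rule inE)
    then have "lam * \<bar>\<Sum>a\<in>UNIV. \<Sum>b\<in>UNIV. pmf \<tau> a * pmf q b * (d a b - u b)\<bar> \<le> lam * E"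
      using lam0 by (rule mult_left_mono)
    then show ?thesis using x diff lam0 by (simp add: abs_mult)
  qed
  have ne: "Es \<noteq> {}" using L0 U0 unfolding Es_def by blast
  have "E \<le> lam * E" unfolding E_def using ne step E_def by (intro cSup_least) auto
  then have E0: "E \<le> 0" using lam1 by (smt (verit) mult_le_cancel_right1)
  have "\<bar>disc_payoff phi lam (strat phi lam tp tm v0) \<sigma>Y0 - v0\<bar> \<in> Es"
    using assms unfolding Es_def Lo_def Up_def by blast
  then have "\<bar>disc_payoff phi lam (strat phi lam tp tm v0) \<sigma>Y0 - v0\<bar> \<le> 0"
    using upper E0 by fastforce
  then show ?thesis by simp
qed

lemma good_autocratic: "autocratic phi lam (strat phi lam tp tm 0)"
  unfolding autocratic_def
  using strat_value good_facts[OF lam0 lam1 gd] by auto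

end



definition mkY :: "'b \<Rightarrow> ('a \<times> 'b \<Rightarrow> ('a, 'b) hist \<Rightarrow> 'b pmf) \<Rightarrow> ('a, 'b) hist \<Rightarrow> 'b pmf" where
  "mkY b0 F = (\<lambda>h. case h of [] \<Rightarrow> return_pmf b0 | x # h' \<Rightarrow> F x h')"

lemma mkY_Nil: "mkY b0 F [] = return_pmf b0"
  by (simp add: mkY_def)

lemma shift1_mkY: "shift1 (mkY b0 F) a b = F (a, b)"
  by (simp add: mkY_def shift1_def)

lemma sum_return_pmf:
  fixes f :: "'b::finite \<Rightarrow> real"
  shows "(\<Sum>b\<in>UNIV. c * pmf (return_pmf b0) b * f b) = c * f b0"
proof -
  have "(\<Sum>b\<in>UNIV. c * pmf (return_pmf b0) b * f b) = (\<Sum>b\<in>UNIV. if b0 = b then c * f b else 0)"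
    by (rule sum.cong) (auto simp: indicator_def)
  then show ?thesis by simp
qed

lemma disc_mkY:
  fixes phi :: "'a::finite \<Rightarrow> 'b::finite \<Rightarrow> real"
  assumes "0 \<le> lam" "lam < 1"
  shows "disc_payoff phi lam \<sigma> (mkY b0 F) =
     (1 - lam) * phi_mix phi (\<sigma> []) b0 +
     lam * (\<Sum>a\<in>UNIV. pmf (\<sigma> []) a * disc_payoff phi lam (shift1 \<sigma> a b0) (F (a, b0)))"
proof -
  have i: "inner_pay phi (\<sigma> []) (return_pmf b0) = phi_mix phi (\<sigma> []) b0"
    unfolding inner_pay_alt using sum_return_pmf[of 1 b0 "phi_mix phi (\<sigma> [])"] by simp
  have s: "(\<Sum>a\<in>UNIV. \<Sum>b\<in>UNIV. pmf (\<sigma> []) a * pmf (return_pmf b0) b * G a b) =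
     (\<Sum>a\<in>UNIV. pmf (\<sigma> []) a * G a b0)" for G :: "'a \<Rightarrow> 'b \<Rightarrow> real"
    by (simp only: sum_return_pmf)
  show ?thesis
    using disc_step[OF assms, of phi \<sigma> "mkY b0 F"]
    unfolding mkY_Nil shift1_mkY i s .

qed

lemma one_step:
  fixes phi :: "'a::finite \<Rightarrow> 'b::finite \<Rightarrow> real"
  assumes l0: "0 < lam" and l1: "lam < 1"
    and c: "\<And>\<sigma>Y. disc_payoff phi lam \<sigma> \<sigma>Y = c"
  shows "\<And>a b \<rho>1 \<rho>2. 0 < pmf (\<sigma> []) a \<Longrightarrow>
            disc_payoff phi lam (shift1 \<sigma> a b) \<rho>1 = disc_payoff phi lam (shift1 \<sigma> a b) \<rho>2"
    and "\<And>b. c = (1 - lam) * phi_mix phi (\<sigma> []) b +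
            lam * (\<Sum>a\<in>UNIV. pmf (\<sigma> []) a * disc_payoff phi lam (shift1 \<sigma> a b) \<rho>0)"
proof -
  have l0': "0 \<le> lam" using l0 by simp
  fix b
  show "c = (1 - lam) * phi_mix phi (\<sigma> []) b +
            lam * (\<Sum>a\<in>UNIV. pmf (\<sigma> []) a * disc_payoff phi lam (shift1 \<sigma> a b) \<rho>0)"
    using disc_mkY[OF l0' l1, of phi \<sigma> b "\<lambda>_. \<rho>0"] c by simp
next
  have l0': "0 \<le> lam" using l0 by simp
  fix a0 b0 and \<rho>1 \<rho>2 :: "('a, 'b) hist \<Rightarrow> 'b pmf" assume pos: "0 < pmf (\<sigma> []) a0"
  define F1 where "F1 = (\<lambda>x :: 'a \<times> 'b. \<rho>1)"
  define F2 where "F2 = (\<lambda>x :: 'a \<times> 'b. if x = (a0, b0) then \<rho>2 else \<rho>1)"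
  define X where "X i a = disc_payoff phi lam (shift1 \<sigma> a b0) ((if i then F1 else F2) (a, b0))" for i a
  have e1: "c = (1 - lam) * phi_mix phi (\<sigma> []) b0 + lam * (\<Sum>a\<in>UNIV. pmf (\<sigma> []) a * X True a)"
    using disc_mkY[OF l0' l1, of phi \<sigma> b0 F1] c by (simp add: X_def)
  have e2: "c = (1 - lam) * phi_mix phi (\<sigma> []) b0 + lam * (\<Sum>a\<in>UNIV. pmf (\<sigma> []) a * X False a)"
    using disc_mkY[OF l0' l1, of phi \<sigma> b0 F2] c by (simp add: X_def)
  have "(\<Sum>a\<in>UNIV. pmf (\<sigma> []) a * X True a) - (\<Sum>a\<in>UNIV. pmf (\<sigma> []) a * X False a) =
        (\<Sum>a\<in>UNIV. pmf (\<sigma> []) a * (X True a - X False a))"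
    by (simp add: sum_subtractf right_diff_distrib)
  also have "\<dots> = (\<Sum>a\<in>UNIV. if a = a0 then pmf (\<sigma> []) a0 * (X True a0 - X False a0) else 0)"
    by (rule sum.cong) (auto simp: X_def F1_def F2_def)
  also have "\<dots> = pmf (\<sigma> []) a0 * (X True a0 - X False a0)" by simp
  finally have "pmf (\<sigma> []) a0 * (X True a0 - X False a0) = 0"
    using e1 e2 l0 by simp
  then have "X True a0 = X False a0" using pos by simp
  then show "disc_payoff phi lam (shift1 \<sigma> a0 b0) \<rho>1 = disc_payoff phi lam (shift1 \<sigma> a0 b0) \<rho>2"
    by (simp add: X_def F1_def F2_def)
qed



definition Kset :: "('a::finite \<Rightarrow> 'b::finite \<Rightarrow> real) \<Rightarrow> real \<Rightarrow> real set" where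
  "Kset phi lam = {c. \<exists>\<sigma> :: ('a, 'b) hist \<Rightarrow> 'a pmf. \<forall>\<sigma>Y. disc_payoff phi lam \<sigma> \<sigma>Y = c}"

definition goodeps :: "('a::finite \<Rightarrow> 'b::finite \<Rightarrow> real) \<Rightarrow> real \<Rightarrow> real \<Rightarrow> 'a pmf \<Rightarrow> 'a pmf \<Rightarrow> bool" where
  "goodeps phi lam d tp tm \<longleftrightarrow> (\<forall>b. - d \<le> phi_mix phi tp b) \<and> (\<forall>b. phi_mix phi tm b \<le> d) \<and>
     (\<forall>b1 b2 b3. (1 - lam) * phi_mix phi tp b1 + lam * phi_mix phi tm b2 \<le> phi_mix phi tp b3 + d) \<and>
     (\<forall>b1 b2 b3. phi_mix phi tm b1 \<le> (1 - lam) * phi_mix phi tm b2 + lam * phi_mix phi tp b3 + d)"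

context
  fixes phi :: "'a::finite \<Rightarrow> 'b::finite \<Rightarrow> real" and lam :: real
  assumes l0: "0 < lam" and l1: "lam < 1"
begin

lemma K_bdd: "c \<in> Kset phi lam \<Longrightarrow> \<bar>c\<bar> \<le> bnd phi"
  unfolding Kset_def using disc_bound[of lam phi] l0 l1 by fastforce

lemma K_bdd_above: "bdd_above (Kset phi lam)"
  using K_bdd by (intro bdd_aboveI[of _ "bnd phi"]) (auto simp: abs_le_iff)

lemma K_bdd_below: "bdd_below (Kset phi lam)"
proof (intro bdd_belowI[of _ "- bnd phi"])
  fix x assume "x \<in> Kset phi lam"
  then have "\<bar>x\<bar> \<le> bnd phi" by (rule K_bdd)
  then show "- bnd phi \<le> x" by linarith
qed

lemma K_step:
  assumes c: "\<And>\<sigma>Y. disc_payoff phi lam \<sigma> \<sigma>Y = c"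
  shows "c - lam * Sup (Kset phi lam) \<le> (1 - lam) * phi_mix phi (\<sigma> []) b"
    and "(1 - lam) * phi_mix phi (\<sigma> []) b \<le> c - lam * Inf (Kset phi lam)"
proof -
  define \<rho>0 where "\<rho>0 = (\<lambda>_ :: ('a, 'b) hist. return_pmf (undefined :: 'b))"
  define c' where "c' a = disc_payoff phi lam (shift1 \<sigma> a b) \<rho>0" for a
  define \<tau> where "\<tau> = \<sigma> []"
  have eq: "c = (1 - lam) * phi_mix phi \<tau> b + lam * (\<Sum>a\<in>UNIV. pmf \<tau> a * c' a)"
    using one_step(2)[OF l0 l1 c, of b \<rho>0] by (simp add: c'_def \<tau>_def)
  have inK: "c' a \<in> Kset phi lam" if "0 < pmf \<tau> a" for a
  proof -
    have "\<forall>\<rho>. disc_payoff phi lam (shift1 \<sigma> a b) \<rho> = c' a"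
      using one_step(1)[OF l0 l1 c] that by (simp add: c'_def \<tau>_def)
    then show ?thesis unfolding Kset_def by blast
  qed
  have up: "pmf \<tau> a * c' a \<le> pmf \<tau> a * Sup (Kset phi lam)" for a
  proof (cases "pmf \<tau> a = 0")
    case False
    then have "0 < pmf \<tau> a" using pmf_nonneg[of \<tau> a] by simp
    then have "c' a \<le> Sup (Kset phi lam)" using inK K_bdd_above by (intro cSup_upper) auto
    then show ?thesis by (simp add: mult_left_mono)
  qed simp
  have lo: "pmf \<tau> a * Inf (Kset phi lam) \<le> pmf \<tau> a * c' a" for a
  proof (cases "pmf \<tau> a = 0")
    case False
    then have "0 < pmf \<tau> a" using pmf_nonneg[of \<tau> a] by simp
    then have "Inf (Kset phi lam) \<le> c' a" using inK K_bdd_below by (intro cInf_lower) auto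
    then show ?thesis by (simp add: mult_left_mono)
  qed simp
  have s1: "(\<Sum>a\<in>UNIV. pmf \<tau> a * c' a) \<le> Sup (Kset phi lam)"
  proof -
    have "(\<Sum>a\<in>UNIV. pmf \<tau> a * c' a) \<le> (\<Sum>a\<in>UNIV. pmf \<tau> a * Sup (Kset phi lam))"
      by (rule sum_mono) (rule up)
    also have "\<dots> = Sup (Kset phi lam)" by (simp add: sum_distrib_right[symmetric] sum_pmf_UNIV)
    finally show ?thesis .
  qed
  have s2: "Inf (Kset phi lam) \<le> (\<Sum>a\<in>UNIV. pmf \<tau> a * c' a)"
  proof -
    have "(\<Sum>a\<in>UNIV. pmf \<tau> a * Inf (Kset phi lam)) \<le> (\<Sum>a\<in>UNIV. pmf \<tau> a * c' a)"
      by (rule sum_mono) (rule lo)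
    moreover have "(\<Sum>a\<in>UNIV. pmf \<tau> a * Inf (Kset phi lam)) = Inf (Kset phi lam)"
      by (simp add: sum_distrib_right[symmetric] sum_pmf_UNIV)
    ultimately show ?thesis by simp
  qed
  have "lam * (\<Sum>a\<in>UNIV. pmf \<tau> a * c' a) \<le> lam * Sup (Kset phi lam)"
    using s1 l0 by (simp add: mult_left_mono)
  then show "c - lam * Sup (Kset phi lam) \<le> (1 - lam) * phi_mix phi (\<sigma> []) b"
    using eq by (simp add: \<tau>_def)
  have "lam * Inf (Kset phi lam) \<le> lam * (\<Sum>a\<in>UNIV. pmf \<tau> a * c' a)"
    using s2 l0 by (simp add: mult_left_mono)
  then show "(1 - lam) * phi_mix phi (\<sigma> []) b \<le> c - lam * Inf (Kset phi lam)"
    using eq by (simp add: \<tau>_def)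
qed

lemma nec_eps:
  assumes auto: "autocratic phi lam \<sigma>X" and d: "0 < d"
  shows "\<exists>tp tm. goodeps phi lam d tp tm"
proof -
  define K where "K = Kset phi lam"
  define S where "S = Sup K"
  define I where "I = Inf K"
  have z: "0 \<in> K" using auto unfolding K_def Kset_def autocratic_def by blast
  have S0: "0 \<le> S" unfolding S_def using z K_bdd_above K_def by (intro cSup_upper) auto
  have I0: "I \<le> 0" unfolding I_def using z K_bdd_below K_def by (intro cInf_lower) auto
  have l1': "0 < 1 - lam" using l1 by simp
  define e where "e = d / 2"
  have e0: "0 < e" using d by (simp add: e_def)
  have ne: "K \<noteq> {}" using z by blast
  obtain c1 where c1: "c1 \<in> K" "S - (1 - lam) * e < c1"
    using less_cSupD[OF ne, of "S - (1 - lam) * e"] e0 l1' unfolding S_def by auto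
  obtain c2 where c2: "c2 \<in> K" "c2 < I + (1 - lam) * e"
    using cInf_lessD[OF ne, of "I + (1 - lam) * e"] e0 l1' unfolding I_def by auto
  obtain \<sigma>1 where \<sigma>1: "\<And>\<sigma>Y. disc_payoff phi lam \<sigma>1 \<sigma>Y = c1" using c1 unfolding K_def Kset_def by blast
  obtain \<sigma>2 where \<sigma>2: "\<And>\<sigma>Y. disc_payoff phi lam \<sigma>2 \<sigma>Y = c2" using c2 unfolding K_def Kset_def by blast
  define tp where "tp = \<sigma>1 []"
  define tm where "tm = \<sigma>2 []"
  have p1: "S - e \<le> phi_mix phi tp b" for b
  proof -
    have "c1 - lam * S \<le> (1 - lam) * phi_mix phi tp b"
      using K_step(1)[OF \<sigma>1, of b] by (simp add: tp_def S_def K_def)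
    then have "(1 - lam) * (S - e) \<le> (1 - lam) * phi_mix phi tp b"
      using c1(2) by (simp add: algebra_simps)
    then show ?thesis using l1' by simp
  qed
  have p2: "(1 - lam) * phi_mix phi tp b \<le> S - lam * I" for b
  proof -
    have "(1 - lam) * phi_mix phi tp b \<le> c1 - lam * I"
      using K_step(2)[OF \<sigma>1, of b] by (simp add: tp_def I_def K_def)
    moreover have "c1 \<le> S" unfolding S_def using c1(1) K_bdd_above K_def by (intro cSup_upper) auto
    ultimately show ?thesis by simp
  qed
  have m1: "phi_mix phi tm b \<le> I + e" for b
  proof -
    have "(1 - lam) * phi_mix phi tm b \<le> c2 - lam * I"
      using K_step(2)[OF \<sigma>2, of b] by (simp add: tm_def I_def K_def)
    then have "(1 - lam) * phi_mix phi tm b \<le> (1 - lam) * (I + e)"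
      using c2(2) by (simp add: algebra_simps)
    then show ?thesis using l1' by simp
  qed
  have m2: "I - lam * S \<le> (1 - lam) * phi_mix phi tm b" for b
  proof -
    have "c2 - lam * S \<le> (1 - lam) * phi_mix phi tm b"
      using K_step(1)[OF \<sigma>2, of b] by (simp add: tm_def S_def K_def)
    moreover have "I \<le> c2" unfolding I_def using c2(1) K_bdd_below K_def by (intro cInf_lower) auto
    ultimately show ?thesis by simp
  qed
  have le: "lam * e \<le> e" using l1 e0 by simp
  have "goodeps phi lam d tp tm"
    unfolding goodeps_def
  proof (intro conjI allI)
    fix b show "- d \<le> phi_mix phi tp b" using p1[of b] S0 e0 by (simp add: e_def)
  next
    fix b show "phi_mix phi tm b \<le> d" using m1[of b] I0 e0 by (simp add: e_def)
  next
    fix b1 b2 b3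
    have "lam * phi_mix phi tm b2 \<le> lam * (I + e)" using m1[of b2] l0 by (simp add: mult_left_mono)
    then show "(1 - lam) * phi_mix phi tp b1 + lam * phi_mix phi tm b2 \<le> phi_mix phi tp b3 + d"
      using p2[of b1] p1[of b3] le by (simp add: e_def algebra_simps)
  next
    fix b1 b2 b3
    have "lam * (S - e) \<le> lam * phi_mix phi tp b3" using p1[of b3] l0 by (simp add: mult_left_mono)
    then show "phi_mix phi tm b1 \<le> (1 - lam) * phi_mix phi tm b2 + lam * phi_mix phi tp b3 + d"
      using m1[of b1] m2[of b2] le by (simp add: e_def algebra_simps)
  qed
  then show ?thesis by blast
qed

end



lemma phi_mix_tendsto:
  fixes phi :: "'a::finite \<Rightarrow> 'b \<Rightarrow> real"
  assumes "\<And>a. (\<lambda>n. pmf (t n) a) \<longlonglongrightarrow> pmf t0 a"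
  shows "(\<lambda>n. phi_mix phi (t n) b) \<longlonglongrightarrow> phi_mix phi t0 b"
  unfolding phi_mix_sum by (intro tendsto_sum tendsto_mult assms tendsto_const)

lemma goodeps_limit:
  fixes phi :: "'a::finite \<Rightarrow> 'b::finite \<Rightarrow> real"
  assumes H: "\<And>d. 0 < d \<Longrightarrow> \<exists>tp tm. goodeps phi lam d tp tm"
  shows "\<exists>tp tm. good phi lam tp tm"
proof -
  define dd where "dd n = inverse (real (Suc n))" for n
  have "\<forall>n. \<exists>x. goodeps phi lam (dd n) (fst x) (snd x)"
    using H by (simp add: dd_def)
  then obtain f where f: "\<And>n. goodeps phi lam (dd n) (fst (f n)) (snd (f n))"
    by metis
  define P where "P n = fst (f n)" for n
  define Q where "Q n = snd (f n)" for n
  obtain r1 tp where r1: "strict_mono r1" and lp: "\<And>a. (\<lambda>n. pmf (P (r1 n)) a) \<longlonglongrightarrow> pmf tp a"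
    using pmf_seq_compact[of P] by blast
  obtain r2 tm where r2: "strict_mono r2" and lm: "\<And>a. (\<lambda>n. pmf (Q (r1 (r2 n))) a) \<longlonglongrightarrow> pmf tm a"
    using pmf_seq_compact[of "\<lambda>n. Q (r1 n)"] by blast
  define r where "r = r1 \<circ> r2"
  have lp': "(\<lambda>n. pmf (P (r n)) a) \<longlonglongrightarrow> pmf tp a" for a
    using LIMSEQ_subseq_LIMSEQ[OF lp r2] by (simp add: r_def o_def)
  have lm': "(\<lambda>n. pmf (Q (r n)) a) \<longlonglongrightarrow> pmf tm a" for a
    using lm by (simp add: r_def o_def)
  have rm: "strict_mono r" using r1 r2 by (simp add: r_def strict_mono_o)
  have ld: "(\<lambda>n. dd (r n)) \<longlonglongrightarrow> 0"
    using LIMSEQ_subseq_LIMSEQ[OF LIMSEQ_inverse_real_of_nat rm] by (simp add: dd_def o_def)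
  define x where "x n b = phi_mix phi (P (r n)) b" for n b
  define y where "y n b = phi_mix phi (Q (r n)) b" for n b
  have lx: "(\<lambda>n. x n b) \<longlonglongrightarrow> phi_mix phi tp b" for b
    unfolding x_def by (rule phi_mix_tendsto[OF lp'])
  have ly: "(\<lambda>n. y n b) \<longlonglongrightarrow> phi_mix phi tm b" for b
    unfolding y_def by (rule phi_mix_tendsto[OF lm'])
  have g: "goodeps phi lam (dd (r n)) (P (r n)) (Q (r n))" for n
    using f by (simp add: P_def Q_def)
  have "good phi lam tp tm"
    unfolding good_def
  proof (intro conjI allI)
    fix b
    have "(\<lambda>n. - dd (r n)) \<longlonglongrightarrow> - 0" by (intro tendsto_minus ld)
    moreover have "- dd (r n) \<le> x n b" for n using g[of n] by (simp add: goodeps_def x_def)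
    ultimately show "0 \<le> phi_mix phi tp b" using lx[of b] by (intro LIMSEQ_le) auto
  next
    fix b
    have "y n b \<le> dd (r n)" for n using g[of n] by (simp add: goodeps_def y_def)
    then show "phi_mix phi tm b \<le> 0" using ly[of b] ld by (intro LIMSEQ_le) auto
  next
    fix b1 b2 b3
    have "(\<lambda>n. (1 - lam) * x n b1 + lam * y n b2) \<longlonglongrightarrow> (1 - lam) * phi_mix phi tp b1 + lam * phi_mix phi tm b2"
      by (intro tendsto_intros lx ly)
    moreover have "(\<lambda>n. x n b3 + dd (r n)) \<longlonglongrightarrow> phi_mix phi tp b3 + 0"
      by (intro tendsto_intros lx ld)
    moreover have "(1 - lam) * x n b1 + lam * y n b2 \<le> x n b3 + dd (r n)" for n
      using g[of n] by (simp add: goodeps_def x_def y_def)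
    ultimately show "(1 - lam) * phi_mix phi tp b1 + lam * phi_mix phi tm b2 \<le> phi_mix phi tp b3"
      by (intro LIMSEQ_le[where X="\<lambda>n. (1 - lam) * x n b1 + lam * y n b2" and Y="\<lambda>n. x n b3 + dd (r n)", simplified]) auto
  next
    fix b1 b2 b3
    have "(\<lambda>n. (1 - lam) * y n b2 + lam * x n b3 + dd (r n)) \<longlonglongrightarrow> (1 - lam) * phi_mix phi tm b2 + lam * phi_mix phi tp b3 + 0"
      by (intro tendsto_intros lx ly ld)
    moreover have "y n b1 \<le> (1 - lam) * y n b2 + lam * x n b3 + dd (r n)" for n
      using g[of n] by (simp add: goodeps_def x_def y_def)
    ultimately show "phi_mix phi tm b1 \<le> (1 - lam) * phi_mix phi tm b2 + lam * phi_mix phi tp b3"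
      using ly[of b1] by (intro LIMSEQ_le[where X="\<lambda>n. y n b1", simplified]) auto
  qed
  then show ?thesis by blast
qed



lemma pm_bound:
  fixes phi :: "'a::finite \<Rightarrow> 'b::finite \<Rightarrow> real"
  shows "\<bar>phi_mix phi \<tau> b\<bar> \<le> bnd phi"
proof -
  have "\<bar>phi_mix phi \<tau> b\<bar> \<le> (\<Sum>a\<in>UNIV. \<bar>pmf \<tau> a * phi a b\<bar>)"
    unfolding phi_mix_sum by (rule sum_abs)
  also have "\<dots> \<le> (\<Sum>a\<in>UNIV. \<bar>phi a b\<bar>)"
  proof (rule sum_mono)
    fix a show "\<bar>pmf \<tau> a * phi a b\<bar> \<le> \<bar>phi a b\<bar>"
      using pmf_le_1[of \<tau> a] by (simp add: abs_mult mult_left_le_one_le)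
  qed
  also have "\<dots> \<le> (\<Sum>a\<in>UNIV. \<Sum>b'\<in>UNIV. \<bar>phi a b'\<bar>)"
    by (intro sum_mono member_le_sum) auto
  finally show ?thesis by (simp add: bnd_def)
qed

lemma maxY_bound: "\<bar>maxY phi \<tau>\<bar> \<le> bnd phi"
  using maxY_ex[of phi \<tau>] pm_bound by metis

lemma minY_bound: "\<bar>minY phi \<tau>\<bar> \<le> bnd phi"
  using minY_ex[of phi \<tau>] pm_bound by metis

definition ratio :: "('a::finite \<Rightarrow> 'b::finite \<Rightarrow> real) \<Rightarrow> 'a pmf \<times> 'a pmf \<Rightarrow> real" where
  "ratio phi = (\<lambda>(tp, tm). (minY phi tp - maxY phi tm) /
      max (maxY phi tp - maxY phi tm) (minY phi tp - minY phi tm))"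

lemma lambda_min_ratio: "lambda_min phi = 1 - Sup (ratio phi ` (PhiPlus phi \<times> PhiMinus phi))"
  by (simp add: lambda_min_def ratio_def)

lemma disj_facts:
  fixes phi :: "'a::finite \<Rightarrow> 'b::finite \<Rightarrow> real"
  assumes "PhiPlus phi \<inter> PhiMinus phi = {}" "tp \<in> PhiPlus phi" "tm \<in> PhiMinus phi"
  shows "0 < max (maxY phi tp - maxY phi tm) (minY phi tp - minY phi tm)"
    and "ratio phi (tp, tm) \<le> 1"
proof -
  have "tp \<notin> PhiMinus phi" using assms by blast
  then have "0 < maxY phi tp" by (simp add: PhiMinus_def)
  moreover have "maxY phi tm \<le> 0" using assms(3) by (simp add: PhiMinus_def)
  ultimately show D: "0 < max (maxY phi tp - maxY phi tm) (minY phi tp - minY phi tm)" by simp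
  obtain b where "minY phi tm = phi_mix phi tm b" using minY_ex by blast
  then have "minY phi tm \<le> maxY phi tm" using maxY_ge by metis
  then have "minY phi tp - maxY phi tm \<le> max (maxY phi tp - maxY phi tm) (minY phi tp - minY phi tm)"
    by simp
  then show "ratio phi (tp, tm) \<le> 1" using D by (simp add: ratio_def)
qed

lemma bdd_ratio:
  fixes phi :: "'a::finite \<Rightarrow> 'b::finite \<Rightarrow> real"
  assumes "PhiPlus phi \<inter> PhiMinus phi = {}"
  shows "bdd_above (ratio phi ` (PhiPlus phi \<times> PhiMinus phi))"
  using disj_facts(2)[OF assms] by (intro bdd_aboveI[of _ 1]) auto

lemma rhs_from_good:
  fixes phi :: "'a::finite \<Rightarrow> 'b::finite \<Rightarrow> real"
  assumes l0: "0 \<le> lam" and l1: "lam < 1" and gd: "good phi lam tp tm"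
  shows "PhiPlus phi \<noteq> {} \<and> PhiMinus phi \<noteq> {} \<and>
     (PhiPlus phi \<inter> PhiMinus phi \<noteq> {} \<or>
      (PhiPlus phi \<inter> PhiMinus phi = {} \<and> lam \<ge> lambda_min phi))"
proof -
  note gf = good_facts[OF l0 l1 gd]
  have tp: "tp \<in> PhiPlus phi" using gf by (simp add: PhiPlus_def)
  have tm: "tm \<in> PhiMinus phi" using gf by (simp add: PhiMinus_def)
  have "lam \<ge> lambda_min phi" if dj: "PhiPlus phi \<inter> PhiMinus phi = {}"
  proof -
    define N where "N = minY phi tp - maxY phi tm"
    define D where "D = max (maxY phi tp - maxY phi tm) (minY phi tp - minY phi tm)"
    have D0: "0 < D" using disj_facts(1)[OF dj tp tm] by (simp add: D_def)
    have a1: "(1 - lam) * (maxY phi tp - maxY phi tm) \<le> N"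
      using gf(3) by (simp add: N_def algebra_simps)
    have a2: "(1 - lam) * (minY phi tp - minY phi tm) \<le> N"
      using gf(4) by (simp add: N_def algebra_simps)
    have "(1 - lam) * D \<le> N"
      using a1 a2 by (simp add: D_def max_def)
    then have r: "1 - lam \<le> ratio phi (tp, tm)"
      using D0 by (simp add: ratio_def N_def[symmetric] D_def[symmetric] pos_le_divide_eq)
    have "ratio phi (tp, tm) \<le> Sup (ratio phi ` (PhiPlus phi \<times> PhiMinus phi))"
      using tp tm bdd_ratio[OF dj] by (intro cSup_upper) auto
    then show ?thesis using r by (simp add: lambda_min_ratio)
  qed
  then show ?thesis using tp tm by blast
qed

lemma good_from_rhs:
  fixes phi :: "'a::finite \<Rightarrow> 'b::finite \<Rightarrow> real"
  assumes l0: "0 \<le> lam" and l1: "lam < 1"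
    and rhs: "PhiPlus phi \<noteq> {} \<and> PhiMinus phi \<noteq> {} \<and>
     (PhiPlus phi \<inter> PhiMinus phi \<noteq> {} \<or>
      (PhiPlus phi \<inter> PhiMinus phi = {} \<and> lam \<ge> lambda_min phi))"
  shows "\<exists>tp tm. good phi lam tp tm"
proof (cases "PhiPlus phi \<inter> PhiMinus phi = {}")
  case False
  then obtain t0 where t0: "t0 \<in> PhiPlus phi" "t0 \<in> PhiMinus phi" by blast
  have z: "phi_mix phi t0 b = 0" for b
    using t0 minY_le[of phi t0 b] maxY_ge[of phi t0 b] by (simp add: PhiPlus_def PhiMinus_def)
  have "good phi lam t0 t0" by (simp add: good_def z)
  then show ?thesis by blast
next
  case dj: True
  define R where "R = ratio phi ` (PhiPlus phi \<times> PhiMinus phi)"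
  have Rne: "R \<noteq> {}" using rhs by (simp add: R_def)
  have sup: "1 - lam \<le> Sup R" using rhs dj by (simp add: lambda_min_ratio R_def)
  have bnd0: "0 \<le> bnd phi" by (simp add: bnd_def sum_nonneg)
  show ?thesis
  proof (rule goodeps_limit)
    fix d :: real assume d: "0 < d"
    define \<eta> where "\<eta> = d / (2 * bnd phi + 1)"
    have \<eta>0: "0 < \<eta>" using d bnd0 by (simp add: \<eta>_def)
    have \<eta>b: "2 * bnd phi * \<eta> \<le> d"
    proof -
      have "2 * bnd phi * \<eta> \<le> (2 * bnd phi + 1) * \<eta>" using \<eta>0 by simp
      also have "\<dots> = d" using bnd0 by (simp add: \<eta>_def)
      finally show ?thesis .
    qed
    obtain x where x: "x \<in> R" "Sup R - \<eta> < x" using less_cSupD[OF Rne, of "Sup R - \<eta>"] \<eta>0 by auto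
    then obtain tp tm where tp: "tp \<in> PhiPlus phi" and tm: "tm \<in> PhiMinus phi" and xr: "x = ratio phi (tp, tm)"
      unfolding R_def by auto
    define N where "N = minY phi tp - maxY phi tm"
    define D where "D = max (maxY phi tp - maxY phi tm) (minY phi tp - minY phi tm)"
    have D0: "0 < D" using disj_facts(1)[OF dj tp tm] by (simp add: D_def)
    have xND: "x = N / D" by (simp add: xr ratio_def N_def D_def)
    have "(1 - lam - \<eta>) * D \<le> N"
    proof -
      have "1 - lam - \<eta> \<le> N / D" using x(2) sup xND by simp
      then show ?thesis using D0 by (simp add: pos_le_divide_eq)
    qed
    moreover have "\<eta> * D \<le> d"
    proof -
      have "D \<le> 2 * bnd phi"
        using maxY_bound[of phi tp] maxY_bound[of phi tm] minY_bound[of phi tp] minY_bound[of phi tm]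
        by (simp add: D_def abs_le_iff)
      then have "\<eta> * D \<le> \<eta> * (2 * bnd phi)" using \<eta>0 by (simp add: mult_left_mono)
      then show ?thesis using \<eta>b by (simp add: mult_ac)
    qed
    ultimately have main: "(1 - lam) * D \<le> N + d" by (simp add: algebra_simps)
    have c1: "(1 - lam) * (maxY phi tp - maxY phi tm) \<le> N + d"
      using main l1 by (smt (verit) D_def max.cobounded1 mult_left_mono)
    have c2: "(1 - lam) * (minY phi tp - minY phi tm) \<le> N + d"
      using main l1 by (smt (verit) D_def max.cobounded2 mult_left_mono)
    have mp: "0 \<le> minY phi tp" using tp by (simp add: PhiPlus_def)
    have mm: "maxY phi tm \<le> 0" using tm by (simp add: PhiMinus_def)
    have "goodeps phi lam d tp tm"
      unfolding goodeps_def
    proof (intro conjI allI)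
      fix b show "- d \<le> phi_mix phi tp b" using minY_le[of phi tp b] mp d by simp
    next
      fix b show "phi_mix phi tm b \<le> d" using maxY_ge[of phi tm b] mm d by simp
    next
      fix b1 b2 b3
      have "(1 - lam) * phi_mix phi tp b1 \<le> (1 - lam) * maxY phi tp"
        using maxY_ge l1 by (intro mult_left_mono) auto
      moreover have "lam * phi_mix phi tm b2 \<le> lam * maxY phi tm"
        using maxY_ge l0 by (intro mult_left_mono) auto
      moreover have "minY phi tp \<le> phi_mix phi tp b3" by (rule minY_le)
      ultimately show "(1 - lam) * phi_mix phi tp b1 + lam * phi_mix phi tm b2 \<le> phi_mix phi tp b3 + d"
        using c1 by (simp add: N_def algebra_simps)
    next
      fix b1 b2 b3
      have "(1 - lam) * minY phi tm \<le> (1 - lam) * phi_mix phi tm b2"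
        using minY_le l1 by (intro mult_left_mono) auto
      moreover have "lam * minY phi tp \<le> lam * phi_mix phi tp b3"
        using minY_le l0 by (intro mult_left_mono) auto
      moreover have "phi_mix phi tm b1 \<le> maxY phi tm" by (rule maxY_ge)
      ultimately show "phi_mix phi tm b1 \<le> (1 - lam) * phi_mix phi tm b2 + lam * phi_mix phi tp b3 + d"
        using c2 by (simp add: N_def algebra_simps)
    qed
    then show "\<exists>tp tm. goodeps phi lam d tp tm" by blast
  qed
qed

lemma nec_good:
  fixes phi :: "'a::finite \<Rightarrow> 'b::finite \<Rightarrow> real"
  assumes l0: "0 \<le> lam" and l1: "lam < 1" and au: "autocratic phi lam \<sigma>X"
  shows "\<exists>tp tm. good phi lam tp tm"
proof (cases "lam = 0")
  case False
  then have "0 < lam" using l0 by simp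
  then show ?thesis using nec_eps[OF _ l1 au] by (intro goodeps_limit) auto
next
  case True
  have z: "phi_mix phi (\<sigma>X []) b = 0" for b
  proof -
    have "disc_payoff phi lam \<sigma>X (mkY b (\<lambda>_. \<lambda>_. return_pmf b)) = 0"
      using au by (simp add: autocratic_def)
    then show ?thesis using disc_mkY[OF l0 l1, of phi \<sigma>X b] True by simp
  qed
  have "good phi lam (\<sigma>X []) (\<sigma>X [])" by (simp add: good_def z)
  then show ?thesis by blast
qed

theorem proposition4:
  fixes phi :: "'a::finite \<Rightarrow> 'b::finite \<Rightarrow> real" and lam :: real
  assumes "0 \<le> lam" and "lam < 1"
  shows "(\<exists>\<sigma>X :: ('a, 'b) hist \<Rightarrow> 'a pmf. autocratic phi lam \<sigma>X) \<longleftrightarrow>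
    (PhiPlus phi \<noteq> {} \<and> PhiMinus phi \<noteq> {} \<and>
     (PhiPlus phi \<inter> PhiMinus phi \<noteq> {} \<or>
      (PhiPlus phi \<inter> PhiMinus phi = {} \<and> lam \<ge> lambda_min phi)))"
proof
  assume "\<exists>\<sigma>X :: ('a, 'b) hist \<Rightarrow> 'a pmf. autocratic phi lam \<sigma>X"
  then obtain \<sigma>X :: "('a, 'b) hist \<Rightarrow> 'a pmf" where "autocratic phi lam \<sigma>X" by blast
  then obtain tp tm where "good phi lam tp tm" using nec_good[OF assms] by blast
  then show "PhiPlus phi \<noteq> {} \<and> PhiMinus phi \<noteq> {} \<and>
     (PhiPlus phi \<inter> PhiMinus phi \<noteq> {} \<or>
      (PhiPlus phi \<inter> PhiMinus phi = {} \<and> lam \<ge> lambda_min phi))"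
    by (rule rhs_from_good[OF assms])
next
  assume "PhiPlus phi \<noteq> {} \<and> PhiMinus phi \<noteq> {} \<and>
     (PhiPlus phi \<inter> PhiMinus phi \<noteq> {} \<or>
      (PhiPlus phi \<inter> PhiMinus phi = {} \<and> lam \<ge> lambda_min phi))"
  then obtain tp tm where "good phi lam tp tm" using good_from_rhs[OF assms] by blast
  then have "autocratic phi lam (strat phi lam tp tm 0 :: ('a, 'b) hist \<Rightarrow> 'a pmf)"
    by (rule good_autocratic[OF assms])
  then show "\<exists>\<sigma>X :: ('a, 'b) hist \<Rightarrow> 'a pmf. autocratic phi lam \<sigma>X" by blast
qed


end
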